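(* Let $d,a,b$ be positive integers, $r=(d+2b)/d$, $R=(a+d)/d$, with $R\ge3r$, and let $\rho=x_1-r$ with $x_1$ as in the context. On the upper semicircle $t(x)=x+i\sqrt{\rho^2-(x-r)^2}$, $r-\rho\le x\le r+\rho$, the function $x\mapsto\Phi(t(x))$ is strictly increasing (for $x$ where $t(x)\ne r$, i.e. on the whole semicircle).
   Context: For $t\in\mathbb C\setminus\{\pm1,\pm r\}$ let $\Phi(t)=d\log|t+r|-d\log|t-r|+(a+d)(\log|t-1|-\log|t+1|)$. Under $R\ge3r$ there is a unique $x_1\in(r,\infty)$ with $\Phi(x_1)=0$. *)

theory Defs
  imports Complex_Main
begin

definition Phi :: "real \<Rightarrow> real \<Rightarrow> real \<Rightarrow> complex \<Rightarrow> real" where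
  "Phi d a r t = d * ln (cmod (t + complex_of_real r)) - d * ln (cmod (t - complex_of_real r))
      + (a + d) * (ln (cmod (t - 1)) - ln (cmod (t + 1)))"

definition semicircle :: "real \<Rightarrow> real \<Rightarrow> real \<Rightarrow> complex" where
  "semicircle r rho x = Complex x (sqrt (rho\<^sup>2 - (x - r)\<^sup>2))"

end

theory Submission
  imports Defs
begin

lemma ln_lower: fixes z::real assumes "1 \<le> z" shows "2*(z-1)/(z+1) \<le> ln z"
proof -
  have "(\<lambda>z. ln z - 2*(z-1)/(z+1)) 1 \<le> (\<lambda>z. ln z - 2*(z-1)/(z+1)) z"
  proof (rule DERIV_nonneg_imp_nondecreasing[OF assms])
    fix w::real assume w: "1 \<le> w" "w \<le> z"
    have "((\<lambda>z. ln z - 2*(z-1)/(z+1)) has_real_derivative (1/w - 4/(w+1)^2)) (at w)"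
      using w by (auto intro!: derivative_eq_intros simp: field_simps power2_eq_square)
    moreover have "1/w - 4/(w+1)^2 \<ge> 0"
    proof -
      have "(w+1)^2 - 4*w = (w-1)^2" by (simp add: power2_eq_square algebra_simps)
      then have "4*w \<le> (w+1)^2" by (smt (verit) zero_le_power2)
      then show ?thesis using w by (simp add: field_simps)
    qed
    ultimately show "\<exists>y. ((\<lambda>z. ln z - 2*(z-1)/(z+1)) has_real_derivative y) (at w) \<and> 0 \<le> y" by blast
  qed
  then show ?thesis by simp
qed

lemma key_ineq: fixes r x :: real assumes r: "r > 1" and x: "x \<ge> 2*r-1"
  shows "ln ((x+r)/(x-r)) < 3*r*ln ((x+1)/(x-1))"
proof -
  have xr: "x > r" using r x by linarith
  have x1: "x > 1" using r x by linarith
  have L1pos: "ln ((x+1)/(x-1)) > 0" using x1 by (simp add: field_simps)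
  show ?thesis
  proof (cases "2*x > 3*r")
    case True
    have "ln ((x+r)/(x-r)) = ln (1 + 2*r/(x-r))" using xr by (simp add: field_simps)
    also have "\<dots> \<le> 2*r/(x-r)" by (rule ln_add_one_self_le_self) (use xr r in simp)
    finally have u: "ln ((x+r)/(x-r)) \<le> 2*r/(x-r)" .
    have "2*((x+1)/(x-1)-1)/((x+1)/(x-1)+1) \<le> ln ((x+1)/(x-1))"
      by (rule ln_lower) (use x1 in \<open>simp add: field_simps\<close>)
    moreover have "2*((x+1)/(x-1)-1)/((x+1)/(x-1)+1) = 2/x" using x1 by (simp add: field_simps)
    ultimately have l: "2/x \<le> ln ((x+1)/(x-1))" by simp
    have "2*r/(x-r) < 3*r*(2/x)" using True xr r x1 by (simp add: field_simps)
    also have "\<dots> \<le> 3*r*ln ((x+1)/(x-1))" using l r by (intro mult_left_mono) auto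
    finally show ?thesis using u by linarith
  next
    case False
    have x3: "x \<le> 3" using False x by linarith
    have rx: "r \<le> (x+1)/2" using x by (simp add: field_simps)
    have p1: "(x-1)*(x^2-4*x-1) < 0"
    proof -
      have "x*(x-4) < 0" using x1 x3 by (intro mult_pos_neg) auto
      then have "x^2-4*x-1 < 0" by (simp add: power2_eq_square algebra_simps)
      then show ?thesis using x1 by (simp add: mult_pos_neg)
    qed
    have p2: "r*(x^2+3) < 3*x^2+1"
    proof -
      have "r*(x^2+3) \<le> (x+1)/2*(x^2+3)" using rx by (intro mult_right_mono) auto
      moreover have "(x+1)/2*(x^2+3) - (3*x^2+1) = (x-1)*(x^2-4*x-1)/2" by (simp add: power2_eq_square algebra_simps)
      ultimately show ?thesis using p1 by linarith
    qed
    have "(x+r)/(x-r) < ((x+1)/(x-1))^3"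
    proof -
      have "(x+1)^3*(x-r) - (x+r)*(x-1)^3 = 2*x*(3*x^2+1 - r*(x^2+3))"
        by (simp add: power2_eq_square power3_eq_cube algebra_simps)
      moreover have "2*x*(3*x^2+1 - r*(x^2+3)) > 0" using p2 x1 by simp
      ultimately have "(x+r)*(x-1)^3 < (x+1)^3*(x-r)" by linarith
      then show ?thesis using xr x1 by (simp add: field_simps power_divide)
    qed
    then have "ln ((x+r)/(x-r)) < ln (((x+1)/(x-1))^3)" using xr x1 r by (subst ln_less_cancel_iff) auto
    also have "\<dots> = 3 * ln ((x+1)/(x-1))" by (simp add: ln_realpow)
    also have "\<dots> < 3*r*ln ((x+1)/(x-1))" using L1pos r by simp
    finally show ?thesis .
  qed
qed

lemma dln: fixes p q x :: real assumes "p*x+q > 0"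
  shows "((\<lambda>x. ln(p*x+q)) has_real_derivative p/(p*x+q)) (at x)"
  using assms by (auto intro!: derivative_eq_intros simp: field_simps)

theorem lemma4p11:
  fixes d a b :: nat and r R x1 rho :: real
  assumes "d > 0" and "a > 0" and "b > 0"
    and "r = (real d + 2 * real b) / real d"
    and "R = (real a + real d) / real d"
    and "R \<ge> 3 * r"
    and "x1 > r" and "Phi (real d) (real a) r (complex_of_real x1) = 0"
    and "rho = x1 - r"
  shows "strict_mono_on {r - rho .. r + rho} (\<lambda>x. Phi (real d) (real a) r (semicircle r rho x))"
proof -
  define D where "D = real d"
  have D: "D > 0" using assms(1) by (simp add: D_def)
  have "r = 1 + 2*real b/real d" using assms(1,4) by (simp add: field_simps)
  moreover have "2*real b/real d > 0" using assms(1,3) by simp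
  ultimately have r1: "r > 1" by linarith
  have aR: "real a + D = R * D" using assms(5) D by (simp add: D_def field_simps)
  have R3: "R \<ge> 3*r" by fact
  have rho_lt: "rho < r - 1"
  proof (rule ccontr)
    assume "\<not> rho < r - 1"
    then have xx: "x1 \<ge> 2*r-1" using assms(9) by linarith
    have xr: "x1 > r" by fact
    have xo: "x1 > 1" using xr r1 by linarith
    have e1: "complex_of_real x1 + complex_of_real r = complex_of_real (x1+r)" by simp
    have e2: "complex_of_real x1 - complex_of_real r = complex_of_real (x1-r)" by simp
    have e3: "complex_of_real x1 - 1 = complex_of_real (x1-1)" by simp
    have e4: "complex_of_real x1 + 1 = complex_of_real (x1+1)" by simp
    have "Phi (real d) (real a) r (complex_of_real x1)
        = D * (ln (x1+r) - ln (x1-r)) - (real a + D) * (ln (x1+1) - ln (x1-1))"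
      unfolding Phi_def e1 e2 e3 e4 norm_of_real D_def using xr xo r1
      by (simp add: algebra_simps)
    also have "\<dots> = D * (ln ((x1+r)/(x1-r)) - R * ln ((x1+1)/(x1-1)))"
      using xr xo r1 aR by (simp add: ln_div algebra_simps)
    also have "\<dots> < 0"
    proof -
      have "ln ((x1+r)/(x1-r)) < 3*r*ln ((x1+1)/(x1-1))" by (rule key_ineq[OF r1 xx])
      also have "\<dots> \<le> R * ln ((x1+1)/(x1-1))"
        using R3 xo by (intro mult_right_mono) (auto simp: field_simps)
      finally show ?thesis using D by (simp add: mult_pos_neg)
    qed
    finally show False using assms(8) by simp
  qed
  have rho0: "rho > 0" using assms(7,9) by simp
  define K where "K = rho^2 + 1 - r^2"
  have K: "K < 0"
  proof -
    have "rho^2 < (r-1)^2" using rho0 rho_lt by (intro power_strict_mono) auto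
    then show ?thesis unfolding K_def using r1 by (simp add: power2_eq_square algebra_simps)
  qed
  define g where "g = (\<lambda>x. D/2*ln(4*r*x+rho^2) - D/2*ln(rho^2)
        + (real a + D)/2*(ln(2*(r-1)*x+K) - ln(2*(r+1)*x+K)))"
  have A: "4*r*x+rho^2 > 0" if "x \<ge> r - rho" for x
  proof -
    have "x > 0" using that rho_lt by linarith
    then have "4*r*x > 0" using r1 by simp
    moreover have "rho^2 \<ge> 0" by simp
    ultimately show ?thesis by linarith
  qed
  have B: "2*(r-1)*x+K > 0" if "x \<ge> r - rho" for x
  proof -
    have "2*(r-1)*x+K - (r-rho-1)^2 = 2*(r-1)*(x-(r-rho))" unfolding K_def by (simp add: power2_eq_square algebra_simps)
    moreover have "2*(r-1)*(x-(r-rho)) \<ge> 0" using that r1 by simp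
    moreover have "(r-rho-1)^2 > 0" using rho_lt by simp
    ultimately show ?thesis by linarith
  qed
  have C: "2*(r+1)*x+K > 0" if "x \<ge> r - rho" for x
  proof -
    have "2*(r+1)*x+K - (r-rho+1)^2 = 2*(r+1)*(x-(r-rho))" unfolding K_def by (simp add: power2_eq_square algebra_simps)
    moreover have "2*(r+1)*(x-(r-rho)) \<ge> 0" using that r1 by simp
    moreover have "(r-rho+1)^2 > 0" using rho_lt r1 by simp
    ultimately show ?thesis by linarith
  qed
  have fg: "Phi (real d) (real a) r (semicircle r rho x) = g x" if "x \<in> {r - rho .. r + rho}" for x
  proof -
    define s where "s = sqrt (rho\<^sup>2 - (x - r)\<^sup>2)"
    have "\<bar>x - r\<bar> \<le> rho" using that by auto
    then have "(x-r)^2 \<le> rho^2" using rho0 by (metis abs_le_square_iff abs_of_pos)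
    then have s2: "s^2 = rho^2 - (x-r)^2" unfolding s_def by simp
    have sc: "semicircle r rho x = Complex x s" by (simp add: semicircle_def s_def)
    have c1: "Complex x s + complex_of_real r = Complex (x+r) s" by (simp add: complex_eq_iff)
    have c2: "Complex x s - complex_of_real r = Complex (x-r) s" by (simp add: complex_eq_iff)
    have c3: "Complex x s - 1 = Complex (x-1) s" by (simp add: complex_eq_iff)
    have c4: "Complex x s + 1 = Complex (x+1) s" by (simp add: complex_eq_iff)
    have q1: "(x+r)^2 + s^2 = 4*r*x+rho^2" using s2 by (simp add: power2_eq_square algebra_simps)
    have q2: "(x-r)^2 + s^2 = rho^2" using s2 by simp
    have q3: "(x-1)^2 + s^2 = 2*(r-1)*x+K" using s2 unfolding K_def by (simp add: power2_eq_square algebra_simps)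
    have q4: "(x+1)^2 + s^2 = 2*(r+1)*x+K" using s2 unfolding K_def by (simp add: power2_eq_square algebra_simps)
    have "Phi (real d) (real a) r (semicircle r rho x)
       = D * ln (sqrt ((x+r)^2 + s^2)) - D * ln (sqrt ((x-r)^2 + s^2))
         + (real a + D) * (ln (sqrt ((x-1)^2 + s^2)) - ln (sqrt ((x+1)^2 + s^2)))"
      unfolding Phi_def sc c1 c2 c3 c4 complex_norm D_def by simp
    also have "\<dots> = g x" unfolding q1 q2 q3 q4 g_def
      using A[of x] B[of x] C[of x] that by (simp add: ln_sqrt ln_realpow algebra_simps)
    finally show ?thesis .
  qed
  have gmono: "g u < g v" if "r - rho \<le> u" "u < v" for u v
  proof (rule DERIV_pos_imp_increasing[OF that(2)])
    fix x assume x: "u \<le> x" "x \<le> v"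
    then have xl: "x \<ge> r - rho" using that by linarith
    have Ap: "4*r*x+rho^2 > 0" by (rule A[OF xl])
    have Bp: "2*(r-1)*x+K > 0" by (rule B[OF xl])
    have Cp: "2*(r+1)*x+K > 0" by (rule C[OF xl])
    have der: "(g has_real_derivative
        (D/2*(4*r/(4*r*x+rho^2)) - D/2*0 + (real a + D)/2*(2*(r-1)/(2*(r-1)*x+K) - 2*(r+1)/(2*(r+1)*x+K)))) (at x)"
      unfolding g_def
      by (rule DERIV_add DERIV_diff DERIV_cmult dln DERIV_const Ap Bp Cp)+
    have p1: "D/2*(4*r/(4*r*x+rho^2)) - D/2*0 > 0" using D r1 Ap by simp
    have "2*(r-1)/(2*(r-1)*x+K) - 2*(r+1)/(2*(r+1)*x+K) = -4*K/((2*(r-1)*x+K)*(2*(r+1)*x+K))"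
      using Bp Cp by (simp add: field_simps)
    moreover have "-4*K/((2*(r-1)*x+K)*(2*(r+1)*x+K)) > 0"
    proof -
      have "(2*(r-1)*x+K)*(2*(r+1)*x+K) > 0" using Bp Cp by (rule mult_pos_pos)
      moreover have "-4*K > 0" using K by linarith
      ultimately show ?thesis by (rule divide_pos_pos[rotated])
    qed
    ultimately have dp: "2*(r-1)/(2*(r-1)*x+K) - 2*(r+1)/(2*(r+1)*x+K) > 0" by (simp only:)
    have "(real a + D)/2 > 0" using D by simp
    then have p2: "(real a + D)/2*(2*(r-1)/(2*(r-1)*x+K) - 2*(r+1)/(2*(r+1)*x+K)) > 0"
      using dp by (rule mult_pos_pos)
    show "\<exists>y. (g has_real_derivative y) (at x) \<and> 0 < y" 
      apply (rule exI[where x="D/2*(4*r/(4*r*x+rho^2)) - D/2*0 + (real a + D)/2*(2*(r-1)/(2*(r-1)*x+K) - 2*(r+1)/(2*(r+1)*x+K))"])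
      apply (rule conjI[OF der])
      using p1 p2 by linarith
  qed
  show ?thesis
  proof (rule strict_mono_onI)
    fix u v assume "u \<in> {r - rho .. r + rho}" "v \<in> {r - rho .. r + rho}" "u < v"
    then show "Phi (real d) (real a) r (semicircle r rho u) < Phi (real d) (real a) r (semicircle r rho v)"
      using fg gmono by auto
  qed
qed

end
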